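(* For $d\ge2$, the permutation $\pi=(d,d-1,\dots,2,1)$ on $\mathcal{A}=\{a_1,\dots,a_d\}$ given by $\pi_0(a_i)=i$, $\pi_1(a_i)=d+1-i$, is transposition Lagrangian: the vectors $\mathbf{v}_{\mathcal{B}}$, $\mathcal{B}$ ranging over the orbits of size two of $\pi_{\mathcal{A}}$, span a subspace of dimension equal to the number of such orbits, and this number equals $g(\pi)$.
   Context: For $\pi=(\pi_0,\pi_1)$, define $\Omega=\Omega_\pi$ by $\Omega_{\alpha,\beta}=1$ if $\pi_0(\alpha)<\pi_0(\beta)$ and $\pi_1(\alpha)>\pi_1(\beta)$, $-1$ if $\pi_0(\alpha)>\pi_0(\beta)$ and $\pi_1(\alpha)<\pi_1(\beta)$, $0$ otherwise; $g(\pi)=\tfrac12\mathrm{rank}(\Omega_\pi)$ (the genus). Let $\pi_{\mathcal{A}}=\pi_0^{-1}\circ\pi_1:\mathcal{A}\to\mathcal{A}$, $\mathbf{e}_{\mathcal{B}}=\sum_{\alpha\in\mathcal{B}}\mathbf{e}_\alpha$ and $\mathbf{v}_{\mathcal{B}}=\Omega\mathbf{e}_{\mathcal{B}}$. A self-inverse $\pi$ is transposition Lagrangian if $\dim\mathrm{span}\{\mathbf{v}_{\mathcal{B}}:\#\mathcal{B}=2\}=\#\{\text{orbits }\mathcal{B}\text{ with }\#\mathcal{B}=2\}=g(\pi)$. *)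

theory Defs
  imports "Jordan_Normal_Form.DL_Rank"
begin

text \<open>Alphabet: the letters are indexed by 0..<d (index i stands for letter a_(i+1)).
  A permutation pi = (pi0, pi1) is a pair of maps from letters to positions {1..d}.\<close>

definition Omega_mat :: "nat \<Rightarrow> (nat \<Rightarrow> nat) \<Rightarrow> (nat \<Rightarrow> nat) \<Rightarrow> real mat" where
  "Omega_mat d p0 p1 = mat d d (\<lambda>(a, b).
     if p0 a < p0 b \<and> p1 a > p1 b then 1
     else if p0 a > p0 b \<and> p1 a < p1 b then -1 else 0)"

definition genus :: "nat \<Rightarrow> (nat \<Rightarrow> nat) \<Rightarrow> (nat \<Rightarrow> nat) \<Rightarrow> real" where
  "genus d p0 p1 = real (vec_space.rank d (Omega_mat d p0 p1)) / 2"

definition piA :: "nat \<Rightarrow> (nat \<Rightarrow> nat) \<Rightarrow> (nat \<Rightarrow> nat) \<Rightarrow> nat \<Rightarrow> nat" where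
  "piA d p0 p1 = inv_into {0..<d} p0 \<circ> p1"

definition orbit_of :: "(nat \<Rightarrow> nat) \<Rightarrow> nat \<Rightarrow> nat set" where
  "orbit_of f a = {(f ^^ k) a | k. True}"

definition orbits :: "nat \<Rightarrow> (nat \<Rightarrow> nat) \<Rightarrow> (nat \<Rightarrow> nat) \<Rightarrow> nat set set" where
  "orbits d p0 p1 = orbit_of (piA d p0 p1) ` {0..<d}"

definition two_orbits :: "nat \<Rightarrow> (nat \<Rightarrow> nat) \<Rightarrow> (nat \<Rightarrow> nat) \<Rightarrow> nat set set" where
  "two_orbits d p0 p1 = {B \<in> orbits d p0 p1. card B = 2}"

definition e_set :: "nat \<Rightarrow> nat set \<Rightarrow> real vec" where
  "e_set d B = vec d (\<lambda>i. if i \<in> B then 1 else 0)"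

definition v_set :: "nat \<Rightarrow> (nat \<Rightarrow> nat) \<Rightarrow> (nat \<Rightarrow> nat) \<Rightarrow> nat set \<Rightarrow> real vec" where
  "v_set d p0 p1 B = Omega_mat d p0 p1 *\<^sub>v e_set d B"

definition span_dim :: "nat \<Rightarrow> real vec set \<Rightarrow> nat" where
  "span_dim d S = vectorspace.dim class_ring
      (LinearCombinations.module.span_vs class_ring (module_vec TYPE(real) d) S)"

definition self_inverse :: "nat \<Rightarrow> (nat \<Rightarrow> nat) \<Rightarrow> (nat \<Rightarrow> nat) \<Rightarrow> bool" where
  "self_inverse d p0 p1 \<longleftrightarrow> (\<forall>a<d. piA d p0 p1 (piA d p0 p1 a) = a)"

definition transposition_Lagrangian :: "nat \<Rightarrow> (nat \<Rightarrow> nat) \<Rightarrow> (nat \<Rightarrow> nat) \<Rightarrow> bool" where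
  "transposition_Lagrangian d p0 p1 \<longleftrightarrow>
     self_inverse d p0 p1 \<and>
     span_dim d (v_set d p0 p1 ` two_orbits d p0 p1) = card (two_orbits d p0 p1) \<and>
     real (card (two_orbits d p0 p1)) = genus d p0 p1"

end

theory Submission
  imports Defs
begin

definition cc :: "nat \<Rightarrow> nat \<Rightarrow> real" where
  "cc i j = (if i < j then 1 else if j < i then -1 else 0)"

lemma alt_sum_even: "(\<Sum>j<2*n. (-1::real)^j) = 0"
  by (induction n) (auto simp: power_add)

lemma mult_entry:
  assumes "x \<in> carrier_vec k" "i < d"
  shows "(mat d k (\<lambda>(i,j). cc i j) *\<^sub>v x) $ i = (\<Sum>j<k. cc i j * x $ j)"
  using assms by (auto simp: scalar_prod_def lessThan_atLeast0 intro!: sum.cong)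

lemma kernel_k:
  assumes "k \<le> d" "even k" "x \<in> carrier_vec k"
    and "mat d k (\<lambda>(i,j). cc i j) *\<^sub>v x = 0\<^sub>v d"
  shows "x = 0\<^sub>v k"
proof -
  define S where "S i = (\<Sum>j<k. cc i j * x $ j)" for i
  have S0: "S i = 0" if "i < d" for i
  proof -
    have "(mat d k (\<lambda>(i,j). cc i j) *\<^sub>v x) $ i = 0" using assms(4) that by simp
    then show ?thesis using mult_entry[OF assms(3) that] S_def by simp
  qed
  have diff: "S i - S (Suc i) = x $ i + x $ Suc i" if "Suc i < k" for i
  proof -
    have "S i - S (Suc i) = (\<Sum>j<k. (cc i j - cc (Suc i) j) * x $ j)"
      unfolding S_def by (simp add: sum_subtractf algebra_simps)
    also have "\<dots> = (\<Sum>j<k. (if j = i then x $ i else 0) + (if j = Suc i then x $ Suc i else 0))"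
      by (rule sum.cong) (auto simp: cc_def)
    also have "\<dots> = x $ i + x $ Suc i"
      using that by (simp add: sum.distrib)
    finally show ?thesis .
  qed
  have alt: "x $ j = (-1)^j * x $ 0" if "j < k" for j
    using that
  proof (induction j)
    case 0 then show ?case by simp
  next
    case (Suc j)
    have "S j - S (Suc j) = 0" using S0 Suc.prems assms(1) by simp
    with diff[OF Suc.prems] have "x $ Suc j = - x $ j" by simp
    with Suc show ?case by simp
  qed
  have x0: "x $ 0 = 0" if k0: "0 < k"
  proof -
    have "S 0 = (\<Sum>j<k. (-1)^j * x $ 0 - (if j = 0 then x $ 0 else 0))"
      unfolding S_def
    proof (rule sum.cong)
      fix j assume "j \<in> {..<k}"
      then have "x $ j = (-1)^j * x $ 0" using alt[of j] by simp
      then show "cc 0 j * x $ j = (-1)^j * x $ 0 - (if j = 0 then x $ 0 else 0)"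
        by (cases "j = 0") (simp_all add: cc_def)
    qed simp
    also have "\<dots> = (\<Sum>j<k. (-1::real)^j) * x $ 0 - x $ 0"
      using k0 by (simp add: sum_subtractf sum_distrib_right)
    also have "\<dots> = - x $ 0"
      using assms(2) alt_sum_even by (auto elim!: evenE)
    finally show ?thesis using S0[of 0] k0 assms(1) by simp
  qed
  show ?thesis
  proof (rule eq_vecI)
    fix j assume "j < dim_vec (0\<^sub>v k :: real vec)"
    then have j: "j < k" by simp
    have "x $ 0 = 0" using x0 j by simp
    then show "x $ j = 0\<^sub>v k $ j" using alt[OF j] j by simp
  qed (use assms(3) in simp)
qed


definition Omm :: "nat \<Rightarrow> real mat" where
  "Omm d = mat d d (\<lambda>(i,j). cc i j)"

lemma Omega_eq: "Omega_mat d (\<lambda>i. i + 1) (\<lambda>i. d - i) = Omm d"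
  unfolding Omega_mat_def Omm_def
  by (rule eq_matI) (auto simp: cc_def)

lemma rank_lower:
  assumes "k \<le> d" "even k"
  shows "k \<le> vec_space.rank d (Omm d)"
proof -
  interpret vec_space "TYPE(real)" d .
  define B where "B = mat d k (\<lambda>(i,j). cc i j)"
  have Bc: "B \<in> carrier_mat d k" unfolding B_def by simp
  have Oc: "Omm d \<in> carrier_mat d d" unfolding Omm_def by simp
  have colB: "col B j = col (Omm d) j" if "j < k" for j
    using that assms(1) unfolding B_def Omm_def by simp
  have dist: "distinct (cols B)"
  proof -
    have "col B i \<noteq> col B j" if "i < j" "j < k" for i j
    proof
      assume "col B i = col B j"
      then have "col B i $ i = col B j $ i" by simp
      then show False using that assms(1) unfolding B_def by (simp add: cc_def)
    qed
    then have "col B i \<noteq> col B j" if "i < k" "j < k" "i \<noteq> j" for i j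
      using that by (metis linorder_neqE_nat)
    then show ?thesis unfolding distinct_conv_nth using Bc by auto
  qed
  have li: "lin_indpt (set (cols B))"
  proof
    assume "lin_dep (set (cols B))"
    then obtain v where v: "v \<in> carrier_vec k" "v \<noteq> 0\<^sub>v k" "B *\<^sub>v v = 0\<^sub>v d"
      using lin_depE[OF Bc _ dist] by blast
    then show False using kernel_k[OF assms v(1)] unfolding B_def by simp
  qed
  have sub: "set (cols B) \<subseteq> set (cols (Omm d))"
  proof
    fix w assume "w \<in> set (cols B)"
    then obtain j where j: "j < k" "w = col B j" using Bc
      by (metis carrier_matD(2) cols_length cols_nth in_set_conv_nth)
    have jd: "j < length (cols (Omm d))" using j assms(1) Oc by simp
    have "w = cols (Omm d) ! j" using colB j assms(1) Oc by auto
    then show "w \<in> set (cols (Omm d))" using nth_mem[OF jd] by simp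
  qed
  have "card (set (cols B)) = k" using distinct_card[OF dist] Bc by simp
  then show ?thesis using rank_ge_card_indpt[OF Oc sub li] by simp
qed

lemma rank_upper_odd:
  assumes "odd d"
  shows "vec_space.rank d (Omm d) < d"
proof -
  interpret vec_space "TYPE(real)" d .
  have Oc: "Omm d \<in> carrier_mat d d" unfolding Omm_def by simp
  have tr: "transpose_mat (Omm d) = (-1) \<cdot>\<^sub>m Omm d"
    unfolding Omm_def by (rule eq_matI) (auto simp: cc_def)
  have "det (Omm d) = det ((-1) \<cdot>\<^sub>m Omm d)" using det_transpose[OF Oc] tr by simp
  also have "\<dots> = - det (Omm d)" using assms Oc by simp
  finally have "det (Omm d) = 0" by simp
  then show ?thesis using det_zero_low_rank[OF Oc] by simp
qed

lemma rank_OO: "vec_space.rank d (Omm d) = 2 * (d div 2)"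
proof (cases "even d")
  case True
  interpret vec_space "TYPE(real)" d .
  have Oc: "Omm d \<in> carrier_mat d d" unfolding Omm_def by simp
  show ?thesis using rank_lower[of d d] True rank_le_nc[OF Oc] by simp
next
  case False
  have "2 * (d div 2) \<le> vec_space.rank d (Omm d)" by (rule rank_lower) auto
  then show ?thesis using rank_upper_odd[OF False] False by presburger
qed



lemma piA_eq: "a < d \<Longrightarrow> piA d Suc (\<lambda>i. d - i) a = d - 1 - a"
  unfolding piA_def by (auto intro!: inv_into_f_eq simp: inj_on_def)

lemma iter_eq: "a < d \<Longrightarrow> (piA d Suc (\<lambda>i. d - i) ^^ k) a = (if even k then a else d - 1 - a)"
proof (induction k)
  case 0 then show ?case by simp
next
  case (Suc k)
  then show ?case by (auto simp: piA_eq)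
qed

lemma orbit_eq: "a < d \<Longrightarrow> orbit_of (piA d Suc (\<lambda>i. d - i)) a = {a, d - 1 - a}"
proof -
  assume a: "a < d"
  have "a \<in> orbit_of (piA d Suc (\<lambda>i. d - i)) a" unfolding orbit_of_def
    by (rule CollectI, rule exI[of _ 0]) simp
  moreover have "d - 1 - a \<in> orbit_of (piA d Suc (\<lambda>i. d - i)) a" unfolding orbit_of_def
    by (rule CollectI, rule exI[of _ 1]) (use piA_eq[OF a] in simp)
  moreover have "orbit_of (piA d Suc (\<lambda>i. d - i)) a \<subseteq> {a, d - 1 - a}"
    unfolding orbit_of_def using iter_eq[OF a] by auto
  ultimately show ?thesis by blast
qed

lemma two_orbits_eq:
  "two_orbits d Suc (\<lambda>i. d - i) = (\<lambda>a. {a, d - 1 - a}) ` {..<d div 2}"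
proof -
  have "orbits d Suc (\<lambda>i. d - i) = (\<lambda>a. {a, d - 1 - a}) ` {0..<d}"
    unfolding orbits_def by (rule image_cong) (auto simp: orbit_eq)
  then have "two_orbits d Suc (\<lambda>i. d - i) = {B \<in> (\<lambda>a. {a, d - 1 - a}) ` {0..<d}. card B = 2}"
    unfolding two_orbits_def by simp
  also have "\<dots> = (\<lambda>a. {a, d - 1 - a}) ` {..<d div 2}"
  proof (intro equalityI subsetI)
    fix B assume "B \<in> {B \<in> (\<lambda>a. {a, d - 1 - a}) ` {0..<d}. card B = 2}"
    then obtain a where a: "a < d" "B = {a, d - 1 - a}" "card B = 2" by auto
    then have ne: "a \<noteq> d - 1 - a" by auto
    show "B \<in> (\<lambda>a. {a, d - 1 - a}) ` {..<d div 2}"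
    proof (cases "a < d div 2")
      case True then show ?thesis using a by auto
    next
      case False
      then have "d - 1 - a < d div 2" using ne a by auto
      moreover have "B = {d - 1 - a, d - 1 - (d - 1 - a)}" using a by auto
      ultimately show ?thesis by blast
    qed
  next
    fix B assume "B \<in> (\<lambda>a. {a, d - 1 - a}) ` {..<d div 2}"
    then obtain a where a: "a < d div 2" "B = {a, d - 1 - a}" by auto
    then have "a \<noteq> d - 1 - a" by auto
    then show "B \<in> {B \<in> (\<lambda>a. {a, d - 1 - a}) ` {0..<d}. card B = 2}" using a by auto
  qed
  finally show ?thesis .
qed

lemma card_two_orbits: "card (two_orbits d Suc (\<lambda>i. d - i)) = d div 2"
proof -
  have "inj_on (\<lambda>a. {a, d - 1 - a}) {..<d div 2}"
  proof (rule inj_onI)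
    fix a b assume ab: "a \<in> {..<d div 2}" "b \<in> {..<d div 2}" "{a, d - 1 - a} = {b, d - 1 - b}"
    then have "a \<in> {b, d - 1 - b}" by blast
    then show "a = b" using ab by auto
  qed
  then show ?thesis unfolding two_orbits_eq by (simp add: card_image)
qed

lemma self_inv: "self_inverse d Suc (\<lambda>i. d - i)"
  unfolding self_inverse_def by (auto simp: piA_eq)


lemma Omega_eq': "Omega_mat d Suc (\<lambda>i. d - i) = Omm d"
  unfolding Omega_mat_def Omm_def
  by (rule eq_matI) (auto simp: cc_def)

definition WW :: "nat \<Rightarrow> real mat" where
  "WW d = mat d (d div 2) (\<lambda>(i,a). cc i a + cc i (d - 1 - a))"

lemma v_eq:
  assumes a: "a < d div 2"
  shows "v_set d Suc (\<lambda>i. d - i) {a, d - 1 - a} = col (WW d) a"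
proof (rule eq_vecI)
  have ne: "a \<noteq> d - 1 - a" "a < d" "d - 1 - a < d" using a by auto
  show "dim_vec (v_set d Suc (\<lambda>i. d - i) {a, d - 1 - a}) = dim_vec (col (WW d) a)"
    unfolding v_set_def WW_def Omega_eq' Omm_def e_set_def by simp
  fix i assume "i < dim_vec (col (WW d) a)"
  then have i: "i < d" unfolding WW_def by simp
  have "v_set d Suc (\<lambda>i. d - i) {a, d - 1 - a} $ i
      = (\<Sum>j\<in>{0..<d}. cc i j * (if j \<in> {a, d - 1 - a} then 1 else 0))"
    unfolding v_set_def Omega_eq' Omm_def e_set_def using i by (simp add: scalar_prod_def)
  also have "\<dots> = (\<Sum>j\<in>{0..<d}. (if j = a then cc i a else 0) + (if j = d - 1 - a then cc i (d - 1 - a) else 0))"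
    by (rule sum.cong) (use ne in auto)
  also have "\<dots> = cc i a + cc i (d - 1 - a)" using ne by (simp add: sum.distrib)
  also have "\<dots> = col (WW d) a $ i" unfolding WW_def using i a by simp
  finally show "v_set d Suc (\<lambda>i. d - i) {a, d - 1 - a} $ i = col (WW d) a $ i" .
qed

lemma kernel_W:
  assumes x: "x \<in> carrier_vec (d div 2)" and eq: "WW d *\<^sub>v x = 0\<^sub>v d"
  shows "x = 0\<^sub>v (d div 2)"
proof -
  define m where "m = d div 2"
  have md: "2 * m \<le> d" unfolding m_def by simp
  have xa: "x $ a = 0" if "a < m" for a
    using that
  proof (induction "m - a" arbitrary: a rule: less_induct)
    case less
    have ad: "a < d" using less.prems md by simp
    have "(WW d *\<^sub>v x) $ a = (\<Sum>b\<in>{0..<m}. (cc a b + cc a (d - 1 - b)) * x $ b)"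
      unfolding WW_def using ad x by (simp add: scalar_prod_def m_def)
    also have "\<dots> = (\<Sum>b\<in>{0..<m}. if b = a then x $ a else 0)"
    proof (rule sum.cong)
      fix b assume b: "b \<in> {0..<m}"
      have c2: "cc a (d - 1 - b) = 1" using b less.prems md by (simp add: cc_def)
      show "(cc a b + cc a (d - 1 - b)) * x $ b = (if b = a then x $ a else 0)"
      proof (cases "a < b")
        case True
        then have "x $ b = 0" using less.hyps[of b] b less.prems by auto
        then show ?thesis using True by simp
      next
        case False
        then show ?thesis using c2 by (cases "b = a") (auto simp: cc_def)
      qed
    qed simp
    also have "\<dots> = x $ a" using less.prems by simp
    finally show ?case using eq ad by simp
  qed
  show ?thesis
  proof (rule eq_vecI)
    fix j assume "j < dim_vec (0\<^sub>v (d div 2) :: real vec)"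
    then show "x $ j = 0\<^sub>v (d div 2) $ j" using xa[of j] by (simp add: m_def)
  qed (use x in simp)
qed

lemma span_part:
  "span_dim d (v_set d Suc (\<lambda>i. d - i) ` two_orbits d Suc (\<lambda>i. d - i)) = d div 2"
proof -
  interpret vec_space "TYPE(real)" d .
  define m where "m = d div 2"
  have Wc: "WW d \<in> carrier_mat d m" unfolding WW_def m_def by simp
  have img: "v_set d Suc (\<lambda>i. d - i) ` two_orbits d Suc (\<lambda>i. d - i) = set (cols (WW d))"
  proof -
    have "v_set d Suc (\<lambda>i. d - i) ` two_orbits d Suc (\<lambda>i. d - i)
        = (\<lambda>a. v_set d Suc (\<lambda>i. d - i) {a, d - 1 - a}) ` {..<m}"
      unfolding two_orbits_eq m_def by (simp add: image_image)
    also have "\<dots> = col (WW d) ` {..<m}"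
      by (rule image_cong) (use v_eq in \<open>auto simp: m_def\<close>)
    also have "\<dots> = set (cols (WW d))"
      unfolding cols_def using Wc by auto
    finally show ?thesis .
  qed
  have dist: "distinct (cols (WW d))"
  proof -
    have md: "2 * m \<le> d" unfolding m_def by simp
    have "col (WW d) i \<noteq> col (WW d) j" if "i < j" "j < m" for i j
    proof
      assume "col (WW d) i = col (WW d) j"
      then have "col (WW d) i $ i = col (WW d) j $ i" by simp
      moreover have "i < d - 1 - i" "i < d - 1 - j" using that md by auto
      ultimately show False using that md unfolding WW_def m_def by (simp add: cc_def)
    qed
    then have "col (WW d) i \<noteq> col (WW d) j" if "i < m" "j < m" "i \<noteq> j" for i j
      using that by (metis linorder_neqE_nat)
    then show ?thesis unfolding distinct_conv_nth using Wc by auto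
  qed
  have li: "lin_indpt (set (cols (WW d)))"
  proof
    assume "lin_dep (set (cols (WW d)))"
    then obtain v where v: "v \<in> carrier_vec m" "v \<noteq> 0\<^sub>v m" "WW d *\<^sub>v v = 0\<^sub>v d"
      using lin_depE[OF Wc _ dist] by blast
    then show False using kernel_W[of v d] unfolding m_def by simp
  qed
  have "rank (WW d) = m" using lin_indpt_full_rank[OF Wc dist li] .
  then show ?thesis unfolding img span_dim_def rank_def m_def by simp
qed

theorem mainTheorem10:
  fixes d :: nat
  assumes "d \<ge> 2"
  shows "transposition_Lagrangian d (\<lambda>i. i + 1) (\<lambda>i. d - i)"
proof -
  have suc: "(\<lambda>i::nat. i + 1) = Suc" by auto
  have g: "genus d Suc (\<lambda>i. d - i) = real (d div 2)"
    unfolding genus_def Omega_eq' rank_OO by simp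
  show ?thesis unfolding suc transposition_Lagrangian_def
    using self_inv span_part card_two_orbits g by simp
qed

end
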